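(* Let $n$ entities move in $\mathbb{R}^1$ during a time interval $[a,b]$ along non-horizontal lines $\sigma(t)=\alpha_\sigma t+\beta_\sigma$ (no three through a common point), and take $\varepsilon=0$, so a trajectoid is a function $\mathcal{T}:[a,b]\to\mathcal{X}$ that may switch from $\sigma$ to $\psi$ only at a time $t$ with $\sigma(t)=\psi(t)$. Then any trajectoid minimizing $\mathcal{D}'(\mathcal{T})=\int_a^b|\mathcal{T}(t)(t)|\,dt$ has at most $8n$ vertices (points of the curve $t\mapsto\mathcal{T}(t)(t)$ where it switches from one line to another).
   Context: Here the ideal trajectory (midpoint of highest and lowest entity) is assumed to coincide with the axis $y=0$ on $[a,b]$, so $\mathcal{D}'$ measures the area between the trajectoid and the ideal trajectory. *)

theory Defs
  imports "HOL-Analysis.Analysis"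
begin

definition entpos :: "(nat \<Rightarrow> real) \<Rightarrow> (nat \<Rightarrow> real) \<Rightarrow> nat \<Rightarrow> real \<Rightarrow> real" where
  "entpos alpha beta i t = alpha i * t + beta i"

text \<open>Trajectoid with epsilon = 0: a choice of entity T t for each time t in [a,b];
  near every time t, every entity chosen at nearby times is at the same position at time t
  as the entity chosen at t, i.e. a switch between entities happens only at a common point.\<close>
definition is_trajectoid ::
  "(nat \<Rightarrow> real) \<Rightarrow> (nat \<Rightarrow> real) \<Rightarrow> nat \<Rightarrow> real \<Rightarrow> real \<Rightarrow> (real \<Rightarrow> nat) \<Rightarrow> bool" where
  "is_trajectoid alpha beta n a b T \<longleftrightarrow>
     (\<forall>t\<in>{a..b}. T t < n) \<and>
     (\<forall>t\<in>{a..b}. \<exists>\<delta>>0. \<forall>s\<in>{a..b}. \<bar>s - t\<bar> < \<delta> \<longrightarrow>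
         entpos alpha beta (T s) t = entpos alpha beta (T t) t)"

definition Dprime ::
  "(nat \<Rightarrow> real) \<Rightarrow> (nat \<Rightarrow> real) \<Rightarrow> real \<Rightarrow> real \<Rightarrow> (real \<Rightarrow> nat) \<Rightarrow> real" where
  "Dprime alpha beta a b T = integral {a..b} (\<lambda>t. \<bar>entpos alpha beta (T t) t\<bar>)"

definition vertex_times ::
  "(nat \<Rightarrow> real) \<Rightarrow> (nat \<Rightarrow> real) \<Rightarrow> real \<Rightarrow> real \<Rightarrow> (real \<Rightarrow> nat) \<Rightarrow> real set" where
  "vertex_times alpha beta a b T =
     {t\<in>{a<..<b}. \<forall>\<delta>>0. \<exists>s\<in>{a..b}. \<bar>s - t\<bar> < \<delta> \<and>
         (alpha (T s), beta (T s)) \<noteq> (alpha (T t), beta (T t))}"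

end

theory Submission imports Defs begin

definition pth :: "(nat \<Rightarrow> real) \<Rightarrow> (nat \<Rightarrow> real) \<Rightarrow> (real \<Rightarrow> nat) \<Rightarrow> real \<Rightarrow> real" where
  "pth al be T t = entpos al be (T t) t"

lemma traj_cont:
  assumes tr: "is_trajectoid al be n a b T"
  shows "continuous_on {a..b} (pth al be T)"
proof -
  define K where "K = (\<Sum>i<n. \<bar>al i\<bar>) + 1"
  have Kp: "K > 0" unfolding K_def by (simp add: add_nonneg_pos sum_nonneg)
  have Kb: "\<bar>al i\<bar> \<le> K" if "i < n" for i
  proof -
    have "\<bar>al i\<bar> \<le> (\<Sum>i<n. \<bar>al i\<bar>)"
      by (rule member_le_sum) (use that in auto)
    then show ?thesis unfolding K_def by linarith
  qed
  show ?thesis unfolding continuous_on_iff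
  proof (intro ballI allI impI)
    fix x e :: real assume x: "x \<in> {a..b}" and e: "0 < e"
    obtain d where d: "d > 0" and dd: "\<forall>s\<in>{a..b}. \<bar>s - x\<bar> < d \<longrightarrow>
         entpos al be (T s) x = entpos al be (T x) x"
      using tr x unfolding is_trajectoid_def by blast
    show "\<exists>d>0. \<forall>x'\<in>{a..b}. dist x' x < d \<longrightarrow> dist (pth al be T x') (pth al be T x) < e"
    proof (intro exI[of _ "min d (e / K)"] conjI ballI impI)
      show "0 < min d (e / K)" using d e Kp by simp
      fix x' assume x': "x' \<in> {a..b}" and dx: "dist x' x < min d (e / K)"
      have "entpos al be (T x') x = entpos al be (T x) x" using dd x' dx by (simp add: dist_real_def)
      then have eq: "pth al be T x' - pth al be T x = al (T x') * (x' - x)"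
        unfolding pth_def entpos_def by (simp add: algebra_simps)
      have Tn: "T x' < n" using tr x' unfolding is_trajectoid_def by blast
      have "\<bar>al (T x') * (x' - x)\<bar> \<le> K * \<bar>x' - x\<bar>"
        unfolding abs_mult by (rule mult_right_mono) (use Kb[OF Tn] in auto)
      also have "\<dots> < K * (e / K)"
        using dx Kp by (intro mult_strict_left_mono) (auto simp: dist_real_def)
      also have "\<dots> = e" using Kp by simp
      finally show "dist (pth al be T x') (pth al be T x) < e"
        using eq by (simp add: dist_real_def)
    qed
  qed
qed


lemma traj_surgery:
  assumes tr: "is_trajectoid al be n a b T" and i: "i < n"
    and cd: "a \<le> c" "c < d" "d \<le> b"
    and cc: "c = a \<or> entpos al be i c = pth al be T c"
    and dc: "d = b \<or> entpos al be i d = pth al be T d"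
  shows "is_trajectoid al be n a b (\<lambda>u. if u \<in> {c..d} then i else T u)"
  unfolding is_trajectoid_def
proof (intro conjI ballI)
  fix t assume t: "t \<in> {a..b}"
  show "(if t \<in> {c..d} then i else T t) < n" using tr t i unfolding is_trajectoid_def by auto
next
  fix t assume t: "t \<in> {a..b}"
  obtain e where e: "e > 0" and ee: "\<And>s. s\<in>{a..b} \<Longrightarrow> \<bar>s - t\<bar> < e \<Longrightarrow>
         entpos al be (T s) t = entpos al be (T t) t"
    using tr t unfolding is_trajectoid_def by blast
  consider "t < c" | "t = c" | "c < t \<and> t < d" | "t = d" | "d < t" by linarith
  then show "\<exists>\<delta>>0. \<forall>s\<in>{a..b}. \<bar>s - t\<bar> < \<delta> \<longrightarrow>
       entpos al be (if s \<in> {c..d} then i else T s) t = entpos al be (if t \<in> {c..d} then i else T t) t"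
  proof cases
    case 1
    show ?thesis
    proof (rule exI[of _ "min e (c - t)"], intro conjI ballI impI)
      show "0 < min e (c - t)" using e 1 by simp
      fix s assume s: "s \<in> {a..b}" "\<bar>s - t\<bar> < min e (c - t)"
      have "s \<notin> {c..d}" "t \<notin> {c..d}" using s 1 by auto
      then have e1: "(if s \<in> {c..d} then i else T s) = T s" "(if t \<in> {c..d} then i else T t) = T t"
        by auto
      show "entpos al be (if s \<in> {c..d} then i else T s) t = entpos al be (if t \<in> {c..d} then i else T t) t"
        unfolding e1 using ee[of s] s by simp
    qed
  next
    case 5
    show ?thesis
    proof (rule exI[of _ "min e (t - d)"], intro conjI ballI impI)
      show "0 < min e (t - d)" using e 5 by simp
      fix s assume s: "s \<in> {a..b}" "\<bar>s - t\<bar> < min e (t - d)"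
      have "s \<notin> {c..d}" "t \<notin> {c..d}" using s 5 by auto
      then have e1: "(if s \<in> {c..d} then i else T s) = T s" "(if t \<in> {c..d} then i else T t) = T t"
        by auto
      show "entpos al be (if s \<in> {c..d} then i else T s) t = entpos al be (if t \<in> {c..d} then i else T t) t"
        unfolding e1 using ee[of s] s by simp
    qed
  next
    case 3
    show ?thesis
    proof (rule exI[of _ "min (t - c) (d - t)"], intro conjI ballI impI)
      show "0 < min (t - c) (d - t)" using 3 by simp
      fix s assume s: "s \<in> {a..b}" "\<bar>s - t\<bar> < min (t - c) (d - t)"
      have "s \<in> {c..d}" "t \<in> {c..d}" using s 3 by auto
      then show "entpos al be (if s \<in> {c..d} then i else T s) t = entpos al be (if t \<in> {c..d} then i else T t) t"
        by simp
    qed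
  next
    case 2
    show ?thesis
    proof (rule exI[of _ "min e (d - c)"], intro conjI ballI impI)
      show "0 < min e (d - c)" using e cd by simp
      fix s assume s: "s \<in> {a..b}" "\<bar>s - t\<bar> < min e (d - c)"
      have tin: "t \<in> {c..d}" using 2 cd by auto
      show "entpos al be (if s \<in> {c..d} then i else T s) t = entpos al be (if t \<in> {c..d} then i else T t) t"
      proof (cases "s \<in> {c..d}")
        case True then show ?thesis using tin by simp
      next
        case False
        then have "s < c" using s 2 by auto
        then have "c \<noteq> a" using s by auto
        then have "entpos al be i c = pth al be T c" using cc by auto
        moreover have "entpos al be (T s) t = entpos al be (T t) t" using ee[of s] s by simp
        ultimately show ?thesis using False tin 2 unfolding pth_def by simp
      qed
    qed
  next
    case 4
    show ?thesis
    proof (rule exI[of _ "min e (d - c)"], intro conjI ballI impI)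
      show "0 < min e (d - c)" using e cd by simp
      fix s assume s: "s \<in> {a..b}" "\<bar>s - t\<bar> < min e (d - c)"
      have tin: "t \<in> {c..d}" using 4 cd by auto
      show "entpos al be (if s \<in> {c..d} then i else T s) t = entpos al be (if t \<in> {c..d} then i else T t) t"
      proof (cases "s \<in> {c..d}")
        case True then show ?thesis using tin by simp
      next
        case False
        then have "s > d" using s 4 by auto
        then have "d \<noteq> b" using s by auto
        then have "entpos al be i d = pth al be T d" using dc by auto
        moreover have "entpos al be (T s) t = entpos al be (T t) t" using ee[of s] s by simp
        ultimately show ?thesis using False tin 4 unfolding pth_def by simp
      qed
    qed
  qed
qed

lemma integral_strict:
  fixes f g :: "real \<Rightarrow> real"
  assumes ab: "a < b" and cf: "continuous_on {a..b} f" and cg: "continuous_on {a..b} g"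
    and le: "\<forall>x\<in>{a..b}. f x \<le> g x" and s: "s \<in> {a..b}" and lt: "f s < g s"
  shows "integral {a..b} f < integral {a..b} g"
proof -
  have ch: "continuous_on {a..b} (\<lambda>x. g x - f x)" using cf cg by (intro continuous_intros)
  have nn: "\<And>x. x \<in> {a..b} \<Longrightarrow> g x - f x \<ge> 0" using le by auto
  have ne: "integral {a..b} (\<lambda>x. g x - f x) \<noteq> 0"
    using integral_eq_0_iff[OF ch ab nn] s lt by auto
  have ge: "integral {a..b} (\<lambda>x. g x - f x) \<ge> 0"
    by (rule integral_nonneg) (use ch nn integrable_continuous_interval in auto)
  have "integral {a..b} (\<lambda>x. g x - f x) = integral {a..b} g - integral {a..b} f"
    by (rule integral_diff) (use cf cg integrable_continuous_interval in auto)
  then show ?thesis using ne ge by linarith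
qed


lemma compact_le0:
  fixes q :: "real \<Rightarrow> real"
  assumes "continuous_on {x..y} q"
  shows "compact {u\<in>{x..y}. q u \<le> 0}"
proof -
  have eq: "{u\<in>{x..y}. q u \<le> 0} = {x..y} \<inter> q -` {..0}" by auto
  have "closed ({x..y} \<inter> q -` {..0})"
    by (rule continuous_closed_preimage) (use assms in auto)
  moreover have "bounded ({x..y} \<inter> q -` {..0})"
    by (rule bounded_subset[of "{x..y}"]) auto
  ultimately show ?thesis unfolding eq using compact_eq_bounded_closed by blast
qed

lemma prod_neg_aux: "x * y > 0 \<Longrightarrow> y < 0 \<Longrightarrow> x < (0::real)"
  by (auto simp: zero_less_mult_iff)

lemma prod_pos_aux: "x * y > 0 \<Longrightarrow> y > 0 \<Longrightarrow> x > (0::real)"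
  by (auto simp: zero_less_mult_iff)

lemma neg_fac_aux: "c > 0 \<Longrightarrow> c * y < 0 \<Longrightarrow> y < (0::real)"
  by (auto simp: mult_less_0_iff)

lemma sig_abs: "\<sigma> = 1 \<or> \<sigma> = -1 \<Longrightarrow> \<sigma> * x \<ge> 0 \<Longrightarrow> \<bar>x\<bar> = \<sigma> * (x::real)"
  by auto

lemma entpos_cont[continuous_intros]: "continuous_on S (\<lambda>u. entpos al be i u)"
  unfolding entpos_def by (intro continuous_intros)

lemma seg_dd:
  fixes x u v dd :: real
  assumes "dd = 1 \<or> dd = -1" "dd* x - dd* u \<ge> 0" "dd* v - dd* x \<ge> 0"
  shows "x \<in> closed_segment u v"
  using assms by (auto simp: closed_segment_eq_real_ivl)

lemma seg_dd_D:
  fixes x u v dd :: real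
  assumes "dd = 1 \<or> dd = -1" "x \<in> closed_segment u v" "dd* v - dd* u \<ge> 0"
  shows "dd* x - dd* u \<ge> 0 \<and> dd* v - dd* x \<ge> 0"
  using assms by (auto simp: closed_segment_eq_real_ivl split: if_splits)

lemma seg_ddr:
  fixes x u v dd :: real
  assumes "dd = 1 \<or> dd = -1" "dd * u - dd * x \<ge> 0" "dd * x - dd * v \<ge> 0"
  shows "x \<in> closed_segment u v"
  using assms by (auto simp: closed_segment_eq_real_ivl)

lemma oseg_dd:
  fixes x u v dd :: real
  assumes "dd = 1 \<or> dd = -1" "dd* x - dd* u > 0" "dd* v - dd* x > 0"
  shows "x \<in> open_segment u v"
  using assms by (auto simp: open_segment_eq_real_ivl)

lemma oseg_dd_D:
  fixes x u v dd :: real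
  assumes "dd = 1 \<or> dd = -1" "x \<in> open_segment u v" "dd* v - dd* u > 0"
  shows "dd* x - dd* u > 0 \<and> dd* v - dd* x > 0"
  using assms by (auto simp: open_segment_eq_real_ivl split: if_splits)

lemma oseg_sub_cseg: "x \<in> open_segment u v \<Longrightarrow> x \<in> closed_segment u (v::real)"
  by (auto simp: open_segment_def)

lemma dd_eq: "dd = 1 \<or> dd = -1 \<Longrightarrow> dd * x = dd * y \<Longrightarrow> x = (y::real)"
  by auto

lemma ddfac: "dd = 1 \<or> dd = -1 \<Longrightarrow> \<sigma> * (c * (u - t)) = (dd*\<sigma>* c) * (dd* u - dd*(t::real))"
  by (auto simp: algebra_simps)

lemma sig_prod: "\<sigma> = 1 \<or> \<sigma> = -1 \<Longrightarrow> \<sigma> * x > 0 \<Longrightarrow> \<sigma> * y > 0 \<Longrightarrow> x * (y::real) > 0"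
  by (auto simp: zero_less_mult_iff)

lemma pos_fac_neg: "c < 0 \<Longrightarrow> c * y > 0 \<Longrightarrow> y < (0::real)"
  by (auto simp: zero_less_mult_iff)
lemma pos_fac_pos: "c > 0 \<Longrightarrow> c * y > 0 \<Longrightarrow> y > (0::real)"
  by (auto simp: zero_less_mult_iff)
lemma nonpos_fac_neg: "c < 0 \<Longrightarrow> c * y \<le> 0 \<Longrightarrow> y \<ge> (0::real)"
  by (auto simp: mult_le_0_iff)
lemma nonpos_fac_pos: "c > 0 \<Longrightarrow> c * y \<le> 0 \<Longrightarrow> y \<le> (0::real)"
  by (auto simp: mult_le_0_iff)

lemma count_sep:
  fixes G S :: "real set"
  assumes fS: "finite S" and sep: "\<forall>x\<in>G. \<forall>y\<in>G. x < y \<longrightarrow> (\<exists>s\<in>S. x < s \<and> s < y)"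
  shows "finite G \<and> card G \<le> card S + 1"
proof -
  have fin_bound: "card F \<le> card S + 1" if F: "F \<subseteq> G" "finite F" for F
  proof (cases "F = {}")
    case True then show ?thesis by simp
  next
    case False
    define m where "m = Max F"
    have mF: "m \<in> F" using Max_in F False m_def by auto
    define f where "f x = Min {s\<in>S. x < s}" for x
    have fprop: "f x \<in> S \<and> x < f x \<and> (\<forall>s\<in>S. x < s \<longrightarrow> f x \<le> s)" if x: "x \<in> F - {m}" for x
    proof -
      have "x \<le> m" using x F m_def by auto
      then have "x < m" using x by auto
      then obtain s where "s \<in> S" "x < s" "s < m" using sep F x mF by blast
      then have ne: "{s\<in>S. x < s} \<noteq> {}" by auto
      have fin: "finite {s\<in>S. x < s}" using fS by auto
      show ?thesis using Min_in[OF fin ne] Min_le[OF fin] unfolding f_def by auto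
    qed
    have inj: "inj_on f (F - {m})"
    proof (rule inj_onI)
      fix x y assume x: "x \<in> F - {m}" and y: "y \<in> F - {m}" and e: "f x = f y"
      show "x = y"
      proof (rule ccontr)
        assume "x \<noteq> y"
        then consider "x < y" | "y < x" by linarith
        then show False
        proof cases
          case 1
          then obtain s where s: "s \<in> S" "x < s" "s < y" using sep F x y by blast
          have "f x \<le> s" using fprop[OF x] s by auto
          moreover have "y < f y" using fprop[OF y] by auto
          ultimately show False using e s by linarith
        next
          case 2
          then obtain s where s: "s \<in> S" "y < s" "s < x" using sep F x y by blast
          have "f y \<le> s" using fprop[OF y] s by auto
          moreover have "x < f x" using fprop[OF x] by auto
          ultimately show False using e s by linarith
        qed
      qed
    qed
    have "card (F - {m}) \<le> card S" by (rule card_inj_on_le[OF inj _ fS]) (use fprop in auto)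
    moreover have "card (F - {m}) = card F - 1" using mF F(2) by simp
    moreover have "card F > 0" using mF F(2) card_gt_0_iff by blast
    ultimately show ?thesis by linarith
  qed
  have "finite G"
  proof (rule ccontr)
    assume "infinite G"
    then obtain F where F: "F \<subseteq> G" "finite F" "card F = card S + 2" using infinite_arbitrarily_large by blast
    have "card F \<le> card S + 1" by (rule fin_bound[OF F(1) F(2)])
    then show False using F(3) by linarith
  qed
  then show ?thesis using fin_bound[of G] by auto
qed

lemma subsing: "(\<forall>x\<in>A. \<forall>y\<in>A. x = y) \<Longrightarrow> finite A \<and> card A \<le> 1"
proof (cases "A = {}")
  case True then show ?thesis by simp
next
  case False
  assume H: "\<forall>x\<in>A. \<forall>y\<in>A. x = y"
  obtain x where x: "x \<in> A" using False by auto
  then have "A = {x}" using H by auto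
  then show ?thesis by simp
qed

lemma UN_card:
  assumes "\<forall>i<n. finite (A i) \<and> card (A i) \<le> 1"
  shows "finite (\<Union>i<n. A i) \<and> card (\<Union>i<n. A i) \<le> n"
proof
  show "finite (\<Union>i<n. A i)" using assms by auto
  have "card (\<Union>i<n. A i) \<le> (\<Sum>i<n. card (A i))" by (rule card_UN_le) simp
  also have "\<dots> \<le> (\<Sum>i<n. 1)" by (rule sum_mono) (use assms in auto)
  finally show "card (\<Union>i<n. A i) \<le> n" by simp
qed


locale mt =
  fixes n :: nat and al be :: "nat \<Rightarrow> real" and a b :: real and T :: "real \<Rightarrow> nat"
  assumes ab: "a < b"
    and nonhoriz: "\<forall>i<n. al i \<noteq> 0"
    and no_three: "\<forall>i<n. \<forall>j<n. \<forall>k<n. \<forall>t. i \<noteq> j \<and> j \<noteq> k \<and> i \<noteq> k \<longrightarrow>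
               \<not> (entpos al be i t = entpos al be j t \<and>
                  entpos al be j t = entpos al be k t)"
    and traj: "is_trajectoid al be n a b T"
    and minimal: "\<forall>T'. is_trajectoid al be n a b T' \<longrightarrow>
                    Dprime al be a b T \<le> Dprime al be a b T'"
begin

abbreviation p where "p \<equiv> pth al be T"
abbreviation L where "L i u \<equiv> entpos al be i u"

lemma pcont: "continuous_on {a..b} p"
  using traj_cont[OF traj] .

lemma Tn: "t \<in> {a..b} \<Longrightarrow> T t < n"
  using traj unfolding is_trajectoid_def by blast

lemma O_lemma:
  assumes i: "i < n" and s: "s \<in> {a..b}" and sg: "\<sigma> = 1 \<or> \<sigma> = -1"
    and pos: "\<sigma> * L i s > 0" and gt: "\<sigma> * p s > \<sigma> * L i s"
  shows "\<exists>z\<in>{a..b}. \<sigma> * L i z \<le> 0 \<and> (\<forall>u\<in>closed_segment s z. \<sigma> * p u > \<sigma> * L i u)"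
proof (rule ccontr)
  assume H: "\<not> ?thesis"
  define q where "q u = \<sigma> * p u - \<sigma> * L i u" for u
  have qc: "continuous_on {a..b} q" unfolding q_def using pcont by (intro continuous_intros) auto
  have qs: "q s > 0" using gt by (simp add: q_def)
  have qcs: "continuous_on {x..y} q" if "a \<le> x" "y \<le> b" for x y
    using continuous_on_subset[OF qc] that by auto
  obtain c where c1: "a \<le> c" "c \<le> s" and c2: "0 \<le> q c" and c3: "c = a \<or> q c = 0"
    and c4: "\<forall>u\<in>{a..s}. q u \<le> 0 \<longrightarrow> u \<le> c"
  proof (cases "{u\<in>{a..s}. q u \<le> 0} = {}")
    case True
    then show ?thesis using that[of a] s by force
  next
    case False
    have "compact {u\<in>{a..s}. q u \<le> 0}" by (rule compact_le0) (use qcs s in auto)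
    then obtain c where cin: "c \<in> {u\<in>{a..s}. q u \<le> 0}" and cmax: "\<forall>y\<in>{u\<in>{a..s}. q u \<le> 0}. y \<le> c"
      using compact_attains_sup[OF _ False] by blast
    obtain w where w: "c \<le> w" "w \<le> s" "q w = 0"
      using IVT'[of q c 0 s] cin qs qcs[of c s] s by auto
    have "w \<le> c" using cmax w cin by auto
    then have "q c = 0" using w by auto
    then show ?thesis using that[of c] cin cmax by auto
  qed
  obtain d where d1: "s \<le> d" "d \<le> b" and d2: "0 \<le> q d" and d3: "d = b \<or> q d = 0"
    and d4: "\<forall>u\<in>{s..b}. q u \<le> 0 \<longrightarrow> d \<le> u"
  proof (cases "{u\<in>{s..b}. q u \<le> 0} = {}")
    case True
    then show ?thesis using that[of b] s by force
  next
    case False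
    have "compact {u\<in>{s..b}. q u \<le> 0}" by (rule compact_le0) (use qcs s in auto)
    then obtain d where din: "d \<in> {u\<in>{s..b}. q u \<le> 0}" and dmin: "\<forall>y\<in>{u\<in>{s..b}. q u \<le> 0}. d \<le> y"
      using compact_attains_inf[OF _ False] by blast
    obtain w where w: "s \<le> w" "w \<le> d" "q w = 0"
      using IVT2'[of q d 0 s] din qs qcs[of s d] s by auto
    have "d \<le> w" using dmin w din by auto
    then have "q d = 0" using w by auto
    then show ?thesis using that[of d] din dmin by auto
  qed
  have cd: "c < d"
  proof (rule ccontr)
    assume "\<not> c < d"
    then have "c = s" "d = s" using c1 d1 by auto
    then have "c = a" "d = b" using c3 d3 qs by auto
    then show False using \<open>c = s\<close> \<open>d = s\<close> ab by auto
  qed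
  have K3: "q u = 0 \<and> (u = c \<or> u = d)" if "u \<in> {c..d}" "q u \<le> 0" for u
  proof (cases "u \<le> s")
    case True
    then have "u \<le> c" using c4 that c1 by auto
    then show ?thesis using that c2 by auto
  next
    case False
    then have "d \<le> u" using d4 that d1 by auto
    then show ?thesis using that d2 by auto
  qed
  have good: "\<forall>w\<in>closed_segment s u. q w > 0" if "u \<in> {c..d}" "q u > 0" for u
  proof
    fix w assume w: "w \<in> closed_segment s u"
    have wcd: "w \<in> {c..d}" using w that c1 d1 by (auto simp: closed_segment_eq_real_ivl split: if_splits)
    show "q w > 0"
    proof (rule ccontr)
      assume "\<not> q w > 0"
      then have "q w = 0" "w = c \<or> w = d" using K3[OF wcd] by auto
      then show False using w that qs c1 d1 by (auto simp: closed_segment_eq_real_ivl split: if_splits)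
    qed
  qed
  have Lpos: "\<sigma> * L i u > 0" if "u \<in> {c..d}" "q u > 0" for u
  proof (rule ccontr)
    assume "\<not> \<sigma> * L i u > 0"
    then have le0: "\<sigma> * L i u \<le> 0" by linarith
    have uab: "u \<in> {a..b}" using that c1 d1 by auto
    have "\<forall>w\<in>closed_segment s u. \<sigma> * p w > \<sigma> * L i w" using good[OF that] by (auto simp: q_def)
    then have "\<exists>z\<in>{a..b}. \<sigma> * L i z \<le> 0 \<and> (\<forall>u\<in>closed_segment s z. \<sigma> * p u > \<sigma> * L i u)"
      using le0 uab by blast
    then show False using H by blast
  qed
  define T' where "T' = (\<lambda>u. if u \<in> {c..d} then i else T u)"
  have trT': "is_trajectoid al be n a b T'"
    unfolding T'_def
  proof (rule traj_surgery[OF traj i c1(1) cd d1(2)])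
    show "c = a \<or> L i c = p c" using c3 sg by (auto simp: q_def)
    show "d = b \<or> L i d = p d" using d3 sg by (auto simp: q_def)
  qed
  have P'eq: "pth al be T' u = (if u \<in> {c..d} then L i u else p u)" for u
    unfolding T'_def pth_def by auto
  have le: "\<forall>u\<in>{a..b}. \<bar>pth al be T' u\<bar> \<le> \<bar>p u\<bar>"
  proof
    fix u assume u: "u \<in> {a..b}"
    show "\<bar>pth al be T' u\<bar> \<le> \<bar>p u\<bar>"
    proof (cases "u \<in> {c..d}")
      case False then show ?thesis by (auto simp: P'eq)
    next
      case True
      show ?thesis
      proof (cases "q u > 0")
        case True': True
        have l: "\<sigma> * L i u > 0" using Lpos True True' by auto
        have "\<bar>L i u\<bar> = \<sigma> * L i u" using sig_abs[OF sg] l by auto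
        moreover have "\<bar>p u\<bar> = \<sigma> * p u" using sig_abs[OF sg, of "p u"] l True' by (auto simp: q_def)
        ultimately show ?thesis using True True' by (simp add: P'eq q_def)
      next
        case False
        then have "q u = 0" using K3 True by auto
        then have "p u = L i u" using sg by (auto simp: q_def)
        then show ?thesis using True by (simp add: P'eq)
      qed
    qed
  qed
  have lt: "\<bar>pth al be T' s\<bar> < \<bar>p s\<bar>"
  proof -
    have sin: "s \<in> {c..d}" using c1 d1 by auto
    have l: "\<sigma> * L i s > 0" using pos .
    have "\<bar>L i s\<bar> = \<sigma> * L i s" using sig_abs[OF sg] l by auto
    moreover have "\<bar>p s\<bar> = \<sigma> * p s" using sig_abs[OF sg, of "p s"] l gt by auto
    ultimately show ?thesis using sin gt by (simp add: P'eq)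
  qed
  have "integral {a..b} (\<lambda>u. \<bar>pth al be T' u\<bar>) < integral {a..b} (\<lambda>u. \<bar>p u\<bar>)"
    by (rule integral_strict[OF ab _ _ le s lt])
      (use traj_cont[OF trT'] pcont in \<open>auto intro!: continuous_intros\<close>)
  moreover have "Dprime al be a b T \<le> Dprime al be a b T'" using minimal trT' by auto
  ultimately show False unfolding Dprime_def pth_def by auto
qed

definition zr :: "nat \<Rightarrow> real" where "zr i = - be i / al i"

lemma alnz: "i < n \<Longrightarrow> al i \<noteq> 0" using nonhoriz by auto

lemma L_fac: "i < n \<Longrightarrow> L i u = al i * (u - zr i)"
  using alnz[of i] unfolding zr_def entpos_def by (simp add: field_simps)

lemma L_zr: "i < n \<Longrightarrow> L i (zr i) = 0"
  using L_fac by simp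

lemma L_zero_iff: "i < n \<Longrightarrow> L i u = 0 \<longleftrightarrow> u = zr i"
  using L_fac[of i u] alnz[of i] by auto

lemma L_diff: "L i u - L i t = al i * (u - t)"
  unfolding entpos_def by (simp add: algebra_simps)

definition outer :: "nat \<Rightarrow> real \<Rightarrow> bool" where
  "outer i u \<longleftrightarrow> (L i u > 0 \<and> p u > L i u) \<or> (L i u < 0 \<and> p u < L i u)"

lemma outer_iff: "outer i u \<longleftrightarrow> (p u - L i u) * L i u > 0"
  unfolding outer_def by (auto simp: zero_less_mult_iff)

definition SepSet :: "nat \<Rightarrow> real set" where
  "SepSet i = {s\<in>{a..b}. zr i \<in> {a..b} \<and> s \<noteq> zr i \<and> p s = L i s \<and>
      (\<forall>u\<in>closed_segment s (zr i). u \<noteq> s \<longrightarrow> p u \<noteq> L i u \<and> (u \<noteq> zr i \<longrightarrow> outer i u))}"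

lemma seg_sub_ab: "x \<in> {a..b} \<Longrightarrow> y \<in> {a..b} \<Longrightarrow> closed_segment x y \<subseteq> {a..b}"
  by (auto simp: closed_segment_eq_real_ivl)

lemma gcont: "continuous_on S (\<lambda>u. p u - L i u)" if "S \<subseteq> {a..b}"
  using continuous_on_subset[OF pcont that] by (intro continuous_intros) auto

lemma Sep_sub:
  assumes i: "i < n" and s1: "s1 \<in> SepSet i" and s2: "s2 \<in> SepSet i"
  shows "s1 = s2"
proof (rule ccontr)
  assume ne: "s1 \<noteq> s2"
  define z where "z = zr i"
  have S1: "s1 \<in> {a..b}" "z \<in> {a..b}" "s1 \<noteq> z" "p s1 = L i s1"
    "\<And>u. u\<in>closed_segment s1 z \<Longrightarrow> u \<noteq> s1 \<Longrightarrow> p u \<noteq> L i u \<and> (u \<noteq> z \<longrightarrow> outer i u)"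
    using s1 unfolding SepSet_def z_def by auto
  have S2: "s2 \<in> {a..b}" "s2 \<noteq> z" "p s2 = L i s2"
    "\<And>u. u\<in>closed_segment s2 z \<Longrightarrow> u \<noteq> s2 \<Longrightarrow> p u \<noteq> L i u \<and> (u \<noteq> z \<longrightarrow> outer i u)"
    using s2 unfolding SepSet_def z_def by auto
  have n1: "s1 \<notin> closed_segment s2 z" using S2(4)[of s1] S1(4) ne by auto
  have n2: "s2 \<notin> closed_segment s1 z" using S1(5)[of s2] S2(3) ne by auto
  have opp: "(s1 < z \<and> z < s2) \<or> (s2 < z \<and> z < s1)"
    using n1 n2 S1(3) S2(2) by (auto simp: closed_segment_eq_real_ivl split: if_splits)
  define u1 where "u1 = (s1 + z) / 2"
  define u2 where "u2 = (s2 + z) / 2"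
  have u1: "u1 \<in> closed_segment s1 z" "u1 \<noteq> s1" "u1 \<noteq> z"
    using S1(3) unfolding u1_def by (auto simp: closed_segment_eq_real_ivl)
  have u2: "u2 \<in> closed_segment s2 z" "u2 \<noteq> s2" "u2 \<noteq> z"
    using S2(2) unfolding u2_def by (auto simp: closed_segment_eq_real_ivl)
  have o1: "(p u1 - L i u1) * L i u1 > 0" using S1(5)[OF u1(1,2)] u1(3) outer_iff by auto
  have o2: "(p u2 - L i u2) * L i u2 > 0" using S2(4)[OF u2(1,2)] u2(3) outer_iff by auto
  have LL: "L i u1 * L i u2 < 0"
  proof -
    have "(u1 - z) * (u2 - z) < 0" using opp unfolding u1_def u2_def
      by (auto simp: mult_less_0_iff)
    moreover have "L i u1 * L i u2 = (al i * al i) * ((u1 - z) * (u2 - z))"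
      unfolding z_def L_fac[OF i, of u1] L_fac[OF i, of u2] by (simp add: algebra_simps)
    moreover have "al i * al i > 0" by (metis alnz[OF i] not_real_square_gt_zero)
    ultimately show ?thesis by (simp add: mult_pos_neg)
  qed
  have gg: "(p u1 - L i u1) * (p u2 - L i u2) < 0"
  proof -
    have "((p u1 - L i u1) * (p u2 - L i u2)) * (L i u1 * L i u2) > 0"
    proof -
      have eq: "((p u1 - L i u1) * (p u2 - L i u2)) * (L i u1 * L i u2)
          = ((p u1 - L i u1) * L i u1) * ((p u2 - L i u2) * L i u2)" by (simp add: algebra_simps)
      show ?thesis unfolding eq by (rule mult_pos_pos[OF o1 o2])
    qed
    then show ?thesis using LL by (rule prod_neg_aux)
  qed
  have "0 \<in> closed_segment (p u1 - L i u1) (p u2 - L i u2)"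
    using gg by (auto simp: closed_segment_eq_real_ivl mult_less_0_iff)
  moreover have "closed_segment u1 u2 \<subseteq> {a..b}"
    using seg_sub_ab u1(1) u2(1) seg_sub_ab[OF S1(1) S1(2)] seg_sub_ab[OF S2(1) S1(2)]
    by (meson dual_order.trans subsetD)
  ultimately obtain w where w: "w \<in> closed_segment u1 u2" "p w - L i w = 0"
    using IVT'_closed_segment_real[of 0 "\<lambda>u. p u - L i u" u1 u2] gcont by blast
  have pz: "p z \<noteq> L i z" using S1(5)[of z] S1(3) by auto
  have "w \<in> closed_segment s1 z - {s1} \<or> w \<in> closed_segment s2 z - {s2}"
    using w(1) opp pz w(2) unfolding u1_def u2_def
    by (auto simp: closed_segment_eq_real_ivl split: if_splits)
  then show False using S1(5) S2(4) w(2) by auto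
qed

lemma Sep_exist:
  assumes i: "i < n" and z: "zr i \<in> {a..b}" and d: "d \<in> {a..b}" and pd: "p d = L i d"
    and sgn: "p (zr i) * L i d > 0"
  shows "\<exists>s\<in>closed_segment (zr i) d. s \<in> SepSet i \<and>
           (\<forall>u\<in>closed_segment (zr i) s. u \<noteq> s \<longrightarrow> p u \<noteq> L i u)"
proof -
  define z where "z = zr i"
  define M where "M = {u\<in>closed_segment z d. p u - L i u = 0}"
  have segab: "closed_segment z d \<subseteq> {a..b}" using seg_sub_ab z d unfolding z_def by auto
  have "closed M"
  proof -
    have "M = closed_segment z d \<inter> (\<lambda>u. p u - L i u) -` {0}" unfolding M_def by auto
    moreover have "closed (closed_segment z d \<inter> (\<lambda>u. p u - L i u) -` {0})"
      by (rule continuous_closed_preimage) (use gcont[OF segab] in auto)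
    ultimately show ?thesis by simp
  qed
  moreover have "bounded M" unfolding M_def by (rule bounded_subset[of "closed_segment z d"]) (auto intro: compact_imp_bounded[OF compact_segment])
  ultimately have cM: "compact M" using compact_eq_bounded_closed by blast
  have dM: "d \<in> M" using pd unfolding M_def by auto
  have Mne: "M \<noteq> {}" using dM by auto
  have cabs: "continuous_on M (\<lambda>u. \<bar>u - z\<bar>)" by (intro continuous_intros)
  obtain s where sM: "s \<in> M" and smin: "\<forall>y\<in>M. \<bar>s - z\<bar> \<le> \<bar>y - z\<bar>"
    using continuous_attains_inf[OF cM Mne cabs] by blast
  have Lz: "L i z = 0" using L_zr[OF i] unfolding z_def .
  have pz0: "p z \<noteq> 0" using sgn unfolding z_def by auto
  have sz: "s \<noteq> z" using sM pz0 Lz unfolding M_def by auto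
  have sseg: "s \<in> closed_segment z d" and ps: "p s = L i s" using sM unfolding M_def by auto
  have first: "\<forall>u\<in>closed_segment z s. u \<noteq> s \<longrightarrow> p u \<noteq> L i u"
  proof (intro ballI impI)
    fix u assume u: "u \<in> closed_segment z s" "u \<noteq> s"
    have "u \<in> closed_segment z d" using u(1) sseg
      by (auto simp: closed_segment_eq_real_ivl split: if_splits)
    moreover have "\<bar>u - z\<bar> < \<bar>s - z\<bar>" using u by (auto simp: closed_segment_eq_real_ivl split: if_splits)
    ultimately show "p u \<noteq> L i u" using smin unfolding M_def by force
  qed
  have Lsgn: "L i u * L i d > 0" if "u \<in> closed_segment z d" "u \<noteq> z" for u
  proof -
    have "(u - z) * (d - z) > 0" using that by (auto simp: closed_segment_eq_real_ivl zero_less_mult_iff split: if_splits)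
    moreover have "L i u * L i d = (al i * al i) * ((u - z) * (d - z))"
      unfolding z_def L_fac[OF i, of u] L_fac[OF i, of d] by (simp add: algebra_simps)
    moreover have "al i * al i > 0" by (metis alnz[OF i] not_real_square_gt_zero)
    ultimately show ?thesis by simp
  qed
  have gsgn: "(p u - L i u) * p z > 0" if "u \<in> closed_segment z s" "u \<noteq> s" for u
  proof (rule ccontr)
    assume "\<not> ?thesis"
    then have "0 \<in> closed_segment (p z - L i z) (p u - L i u)"
      using Lz pz0 by (auto simp: closed_segment_eq_real_ivl mult_le_0_iff zero_less_mult_iff)
    moreover have "closed_segment z u \<subseteq> {a..b}"
      using that sseg segab by (auto simp: closed_segment_eq_real_ivl split: if_splits)
    ultimately obtain w where w: "w \<in> closed_segment z u" "p w - L i w = 0"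
      using IVT'_closed_segment_real[of 0 "\<lambda>u. p u - L i u" z u] gcont by blast
    have "w \<in> closed_segment z s" "w \<noteq> s" using w(1) that
      by (auto simp: closed_segment_eq_real_ivl split: if_splits)
    then show False using first w(2) by auto
  qed
  have "s \<in> SepSet i"
    unfolding SepSet_def
  proof (intro CollectI conjI ballI impI)
    show "s \<in> {a..b}" using sseg segab by auto
    show "zr i \<in> {a..b}" using z .
    show "s \<noteq> zr i" using sz z_def by simp
    show "p s = L i s" using ps .
  next
    fix u assume u: "u \<in> closed_segment s (zr i)" "u \<noteq> s"
    then have u': "u \<in> closed_segment z s" using closed_segment_commute z_def by metis
    show "p u \<noteq> L i u" using first u' u(2) by auto
  next
    fix u assume u: "u \<in> closed_segment s (zr i)" "u \<noteq> s" "u \<noteq> zr i"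
    then have u': "u \<in> closed_segment z s" "u \<noteq> z" using closed_segment_commute z_def by metis+
    have ud: "u \<in> closed_segment z d" using u'(1) sseg
      by (auto simp: closed_segment_eq_real_ivl split: if_splits)
    have A: "(p u - L i u) * p z > 0" using gsgn[OF u'(1) u(2)] .
    have B: "L i u * L i d > 0" using Lsgn[OF ud u'(2)] .
    have C: "p z * L i d > 0" using sgn z_def by simp
    have eq: "((p u - L i u) * L i u) * ((p z * L i d) * (p z * L i d)) = ((p u - L i u) * p z) * (L i u * L i d) * (p z * L i d)"
      by (simp add: algebra_simps)
    have "((p u - L i u) * p z) * (L i u * L i d) * (p z * L i d) > 0" using A B C by simp
    then have "((p u - L i u) * L i u) * ((p z * L i d) * (p z * L i d)) > 0" unfolding eq .
    moreover have "(p z * L i d) * (p z * L i d) > 0" using C by simp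
    ultimately have "(p u - L i u) * L i u > 0" by (rule prod_pos_aux)
    then show "outer i u" using outer_iff by simp
  qed
  then show ?thesis using sseg first z_def by auto
qed

lemma sL_fac: "k < n \<Longrightarrow> dd = 1 \<or> dd = -1 \<Longrightarrow> \<sigma> * L k u = (dd*\<sigma>* al k) * (dd* u - dd* zr k)"
  using L_fac[of k u] ddfac[of dd \<sigma> "al k" u "zr k"] by simp

lemma sL_diff: "dd = 1 \<or> dd = -1 \<Longrightarrow> \<sigma> * L k u - \<sigma> * L k t = (dd*\<sigma>* al k) * (dd* u - dd* t)"
  using L_diff[of k u t] ddfac[of dd \<sigma> "al k" u t] by (simp add: right_diff_distrib[symmetric])

lemma sig_outer: "\<sigma> = 1 \<or> \<sigma> = -1 \<Longrightarrow> \<sigma> * L k u > 0 \<Longrightarrow> \<sigma> * p u > \<sigma> * L k u \<Longrightarrow> outer k u"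
  unfolding outer_def by auto

lemma Sep_side:
  assumes k: "k < n" and t: "t \<in> {a..b}" and pt: "p t = L k t" and sg: "\<sigma> = 1 \<or> \<sigma> = -1"
    and sp: "\<sigma> * p t > 0" and dd: "dd = 1 \<or> dd = -1" and sl: "dd * \<sigma> * al k < 0"
    and H: "\<forall>\<epsilon>>0. \<exists>u\<in>{a..b}. 0 < dd* u - dd* t \<and> dd* u - dd* t < \<epsilon> \<and> \<sigma> * p u > \<sigma> * L k u"
  shows "t \<in> SepSet k"
proof -
  define z where "z = zr k"
  have fac: "\<sigma> * L k u = (dd*\<sigma>* al k) * (dd* u - dd* z)" for u using sL_fac[OF k dd] z_def by simp
  have F1: "dd* z - dd* t > 0"
  proof -
    have e: "\<sigma> * L k t = \<sigma> * p t" using pt by simp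
    have "(dd*\<sigma>* al k) * (dd* t - dd* z) > 0" using fac[of t] e sp by linarith
    then have "dd* t - dd* z < 0" using pos_fac_neg sl by blast
    then show ?thesis by simp
  qed
  have F2: "\<sigma> * L k u > 0" if "dd* z - dd* u > 0" for u
  proof -
    have "(dd*\<sigma>* al k) * (dd* u - dd* z) > 0" using sl that by (intro mult_neg_neg) auto
    then show ?thesis using fac[of u] by linarith
  qed
  have F3: "dd* u - dd* z \<ge> 0" if "\<sigma> * L k u \<le> 0" for u
  proof -
    have "(dd*\<sigma>* al k) * (dd* u - dd* z) \<le> 0" using that fac[of u] by linarith
    then show ?thesis using nonpos_fac_neg[OF sl] by blast
  qed
  obtain u0 where u0: "u0 \<in> {a..b}" "0 < dd* u0 - dd* t" "dd* u0 - dd* t < dd* z - dd* t" "\<sigma> * p u0 > \<sigma> * L k u0"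
    using H[rule_format, OF F1] by blast
  have Lu0: "\<sigma> * L k u0 > 0" using F2 u0 by simp
  obtain z' where z': "z' \<in> {a..b}" "\<sigma> * L k z' \<le> 0"
    using O_lemma[OF k u0(1) sg Lu0 u0(4)] by blast
  have "z \<in> closed_segment u0 z'" by (rule seg_dd[OF dd]) (use F3[OF z'(2)] u0 in linarith)+
  then have zab: "z \<in> {a..b}" using seg_sub_ab[OF u0(1) z'(1)] by auto
  show ?thesis
    unfolding SepSet_def
  proof (intro CollectI conjI ballI impI)
    show "t \<in> {a..b}" by (rule t)
    show "zr k \<in> {a..b}" using zab z_def by simp
    show "t \<noteq> zr k" using F1 z_def by auto
    show "p t = L k t" by (rule pt)
  next
    fix w assume w: "w \<in> closed_segment t (zr k)" "w \<noteq> t"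
    have w1: "dd* w - dd* t \<ge> 0" "dd* z - dd* w \<ge> 0" using seg_dd_D[OF dd w(1)[folded z_def]] F1 by auto
    have "dd* w \<noteq> dd* t" using w(2) dd_eq[OF dd, of w t] by blast
    then have w2: "dd* w - dd* t > 0" using w1(1) by linarith
    obtain u where u: "u \<in> {a..b}" "0 < dd* u - dd* t" "dd* u - dd* t < dd* w - dd* t" "\<sigma> * p u > \<sigma> * L k u"
      using H[rule_format, OF w2] by blast
    have Lu: "\<sigma> * L k u > 0" using F2 u w1 by simp
    obtain z'' where z'': "z'' \<in> {a..b}" "\<sigma> * L k z'' \<le> 0"
      "\<forall>v\<in>closed_segment u z''. \<sigma> * p v > \<sigma> * L k v"
      using O_lemma[OF k u(1) sg Lu u(4)] by blast
    have "w \<in> closed_segment u z''" by (rule seg_dd[OF dd]) (use F3[OF z''(2)] u w1 in linarith)+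
    then have gt: "\<sigma> * p w > \<sigma> * L k w" using z''(3) by blast
    then show "p w \<noteq> L k w" by auto
    assume "w \<noteq> zr k"
    then have "dd* z \<noteq> dd* w" using dd_eq[OF dd, of z w] z_def by blast
    then have "dd* z - dd* w > 0" using w1(2) by linarith
    then have "\<sigma> * L k w > 0" using F2 by simp
    then show "outer k w" using sig_outer[OF sg _ gt] by simp
  qed
qed

lemma never_after:
  assumes j: "j < n" and k: "k < n" and t: "t \<in> {a..b}" and ptj: "p t = L j t" and ptk: "p t = L k t"
    and sg: "\<sigma> = 1 \<or> \<sigma> = -1" and sp: "\<sigma> * p t > 0" and dd: "dd = 1 \<or> dd = -1"
    and s1: "dd * \<sigma> * al k > 0" and s2: "dd * \<sigma> * (al j - al k) > 0"
    and u: "u \<in> {a..b}" and du: "dd* u - dd* t > 0"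
  shows "p u \<noteq> L j u"
proof
  assume pu: "p u = L j u"
  have "\<sigma> * L k u - \<sigma> * L k t = (dd*\<sigma>* al k) * (dd* u - dd* t)" by (rule sL_diff[OF dd])
  moreover have "(dd*\<sigma>* al k) * (dd* u - dd* t) > 0" by (rule mult_pos_pos[OF s1 du])
  moreover have "\<sigma> * p t = \<sigma> * L k t" using ptk by simp
  ultimately have A: "\<sigma> * L k u > 0" using sp by linarith
  have "\<sigma> * L j u - \<sigma> * L k u = \<sigma> * ((al j - al k) * (u - t))"
  proof -
    have e1: "L j u - L j t = al j * (u - t)" "L k u - L k t = al k * (u - t)" using L_diff by auto
    have e2: "L j t = L k t" using ptj ptk by simp
    have e3: "(al j - al k) * (u - t) = al j * (u - t) - al k * (u - t)" by (simp add: left_diff_distrib)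
    have "L j u - L k u = (al j - al k) * (u - t)" using e1 e2 e3 by linarith
    then show ?thesis by (simp add: right_diff_distrib[symmetric])
  qed
  also have "\<dots> = (dd*\<sigma>*(al j - al k)) * (dd* u - dd* t)" by (rule ddfac[OF dd])
  finally have "\<sigma> * L j u - \<sigma> * L k u > 0" using mult_pos_pos[OF s2 du] by simp
  then have B: "\<sigma> * p u > \<sigma> * L k u" using pu by simp
  obtain z' where z': "z' \<in> {a..b}" "\<sigma> * L k z' \<le> 0" "\<forall>v\<in>closed_segment u z'. \<sigma> * p v > \<sigma> * L k v"
    using O_lemma[OF k u sg A B] by blast
  have "\<sigma> * L k z' - \<sigma> * L k t = (dd*\<sigma>* al k) * (dd* z' - dd* t)" by (rule sL_diff[OF dd])
  moreover have "\<sigma> * p t = \<sigma> * L k t" using ptk by simp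
  ultimately have "(dd*\<sigma>* al k) * (dd* z' - dd* t) < 0" using z'(2) sp by linarith
  then have "dd* z' - dd* t < 0" using neg_fac_aux[OF s1] by blast
  then have "t \<in> closed_segment z' u" by (intro seg_dd[OF dd]) (use du in linarith)+
  then have "t \<in> closed_segment u z'" by (simp add: closed_segment_commute)
  then have "\<sigma> * p t > \<sigma> * L k t" using z'(3) by blast
  then show False using ptk by simp
qed

lemma avail:
  assumes j: "j < n" and sg: "\<sigma> = 1 \<or> \<sigma> = -1" and t: "t \<in> {a..b}" and t': "t' \<in> {a..b}"
    and dd: "dd = 1 \<or> dd = -1" and dir: "dd* t' - dd* t > 0" and slope: "dd * \<sigma> * al j > 0"
    and pt': "p t' = L j t'" and pos: "\<forall>u\<in>closed_segment t t'. \<sigma> * p u > 0"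
    and use: "\<exists>u\<in>open_segment t t'. p u = L j u"
    and nosep: "\<forall>u\<in>open_segment t t'. \<forall>i<n. u \<notin> SepSet i"
  shows "\<sigma> * L j t \<ge> \<sigma> * p t"
proof (rule ccontr)
  assume "\<not> ?thesis"
  then have lt: "\<sigma> * L j t < \<sigma> * p t" by simp
  define z where "z = zr j"
  have fac: "\<sigma> * L j u = (dd*\<sigma>* al j) * (dd* u - dd* z)" for u using sL_fac[OF j dd] z_def by simp
  have pos': "dd* u - dd* z > 0" if "\<sigma> * L j u > 0" for u
  proof -
    have "(dd*\<sigma>* al j) * (dd* u - dd* z) > 0" using fac[of u] that by linarith
    then show ?thesis using pos_fac_pos[OF slope] by blast
  qed
  have neg': "dd* u - dd* z \<le> 0" if "\<sigma> * L j u \<le> 0" for u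
  proof -
    have "(dd*\<sigma>* al j) * (dd* u - dd* z) \<le> 0" using fac[of u] that by linarith
    then show ?thesis using nonpos_fac_pos[OF slope] by blast
  qed
  have t'seg: "t' \<in> closed_segment t t'" by simp
  have "\<sigma> * p t' > 0" using pos t'seg by blast
  then have Lt': "\<sigma> * L j t' > 0" using pt' by simp
  have zt': "dd* t' - dd* z > 0" using pos' Lt' by simp
  obtain u0 where u0: "u0 \<in> open_segment t t'" "p u0 = L j u0" using use by blast
  have u0d: "dd* u0 - dd* t > 0" "dd* t' - dd* u0 > 0" using oseg_dd_D[OF dd u0(1) dir] by auto
  have "\<sigma> * p u0 > 0" using pos oseg_sub_cseg[OF u0(1)] by blast
  then have "\<sigma> * L j u0 > 0" using u0(2) by simp
  then have u0z: "dd* u0 - dd* z > 0" using pos' by simp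
  have zinfo: "z \<in> {a..b} \<and> \<sigma> * p z > 0 \<and>
     (\<forall>v. dd* v - dd* z \<ge> 0 \<longrightarrow> dd* t - dd* v \<ge> 0 \<longrightarrow> v \<in> {a..b} \<longrightarrow> p v = L j v \<longrightarrow> v = z)"
  proof (cases "\<sigma> * L j t > 0")
    case True
    obtain z' where z': "z' \<in> {a..b}" "\<sigma> * L j z' \<le> 0" "\<forall>v\<in>closed_segment t z'. \<sigma> * p v > \<sigma> * L j v"
      using O_lemma[OF j t sg True lt] by blast
    have a1: "dd* z' - dd* z \<le> 0" using neg' z'(2) by simp
    have a2: "dd* t - dd* z > 0" using pos' True by simp
    have zs: "z \<in> closed_segment t z'"
      by (rule seg_ddr[OF dd]) (use a1 a2 in linarith)+
    have "z \<in> {a..b}" using seg_sub_ab[OF t z'(1)] zs by auto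
    moreover have "\<sigma> * p z > 0"
    proof -
      have "\<sigma> * p z > \<sigma> * L j z" using z'(3) zs by blast
      moreover have "L j z = 0" using L_zr[OF j] z_def by simp
      ultimately show ?thesis by simp
    qed
    moreover have "v = z" if "dd* v - dd* z \<ge> 0" "dd* t - dd* v \<ge> 0" "p v = L j v" for v
    proof -
      have "v \<in> closed_segment t z'" by (rule seg_ddr[OF dd]) (use that a1 in linarith)+
      then have "\<sigma> * p v > \<sigma> * L j v" using z'(3) by blast
      then show ?thesis using that by simp
    qed
    ultimately show ?thesis by blast
  next
    case False
    then have a2: "dd* t - dd* z \<le> 0" using neg' by simp
    have zs: "z \<in> closed_segment t t'" by (rule seg_dd[OF dd]) (use a2 zt' in linarith)+
    have "z \<in> {a..b}" using seg_sub_ab[OF t t'] zs by auto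
    moreover have "\<sigma> * p z > 0" using pos zs by blast
    moreover have "v = z" if "dd* v - dd* z \<ge> 0" "dd* t - dd* v \<ge> 0" for v
    proof -
      have "dd* v = dd* z" using that a2 by linarith
      then show ?thesis using dd_eq[OF dd] by blast
    qed
    ultimately show ?thesis by blast
  qed
  have zab: "z \<in> {a..b}" and pz: "\<sigma> * p z > 0" using zinfo by auto
  have sgn: "p (zr j) * L j t' > 0" using sig_prod[OF sg pz Lt'] z_def by simp
  obtain s where s: "s \<in> closed_segment (zr j) t'" "s \<in> SepSet j"
    and first: "\<forall>v\<in>closed_segment (zr j) s. v \<noteq> s \<longrightarrow> p v \<noteq> L j v"
    using Sep_exist[OF j zab[unfolded z_def] t' pt' sgn] by blast
  have sd: "dd* s - dd* z \<ge> 0" "dd* t' - dd* s \<ge> 0" using seg_dd_D[OF dd s(1)[folded z_def]] zt' by auto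
  have sS: "s \<in> {a..b}" "s \<noteq> z" "p s = L j s" using s(2) unfolding SepSet_def z_def by auto
  have st: "dd* s - dd* t > 0"
  proof (rule ccontr)
    assume "\<not> ?thesis"
    then have "dd* t - dd* s \<ge> 0" by linarith
    then have "s = z" using zinfo sd(1) sS(1) sS(3) by blast
    then show False using sS by simp
  qed
  have st': "dd* t' - dd* s > 0"
  proof (rule ccontr)
    assume "\<not> ?thesis"
    then have "dd* t' - dd* s = 0" using sd by linarith
    then have "u0 \<in> closed_segment z s"
      by (intro seg_dd[OF dd]) (use u0d u0z in linarith)+
    moreover have "u0 \<noteq> s"
    proof
      assume "u0 = s"
      then show False using u0d \<open>dd* t' - dd* s = 0\<close> by simp
    qed
    ultimately have "u0 \<in> closed_segment (zr j) s" "u0 \<noteq> s" using z_def by auto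
    then show False using first u0(2) by blast
  qed
  have "s \<in> open_segment t t'" by (rule oseg_dd[OF dd st st'])
  then show False using nosep s(2) j by blast
qed

lemma sL_diff1: "\<sigma> * L k u - \<sigma> * L k t = (\<sigma> * al k) * (u - t)"
proof -
  have "\<sigma> * L k u - \<sigma> * L k t = \<sigma> * (L k u - L k t)" by (simp add: right_diff_distrib)
  also have "\<dots> = \<sigma> * (al k * (u - t))" using L_diff by simp
  finally show ?thesis by simp
qed

definition GC :: "real \<Rightarrow> real \<Rightarrow> bool" where
  "GC \<sigma> t \<longleftrightarrow> t \<in> {a<..<b} \<and> \<sigma> * p t > 0 \<and>
     (\<exists>j<n. \<exists>k<n. \<sigma> * al j > 0 \<and> \<sigma> * al k < 0 \<and> p t = L j t \<and> p t = L k t \<and>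
        (\<exists>\<epsilon>>0. \<forall>u. t - \<epsilon> < u \<and> u < t \<longrightarrow> p u = L j u) \<and>
        (\<exists>\<epsilon>>0. \<forall>u. t < u \<and> u < t + \<epsilon> \<longrightarrow> p u = L k u))"

definition Zset :: "real set" where "Zset = {u\<in>{a..b}. p u = 0}"
definition SepU :: "real set" where "SepU = (\<Union>i<n. SepSet i)"
definition LastSet :: "nat \<Rightarrow> real set" where
  "LastSet i = {t\<in>{a..b}. p t = L i t \<and> (\<forall>u\<in>{a..b}. t < u \<longrightarrow> p u \<noteq> L i u)}"
definition FirstSet :: "nat \<Rightarrow> real set" where
  "FirstSet i = {t\<in>{a..b}. p t = L i t \<and> (\<forall>u\<in>{a..b}. u < t \<longrightarrow> p u \<noteq> L i u)}"
definition LastU :: "real set" where "LastU = (\<Union>i<n. LastSet i)"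
definition FirstU :: "real set" where "FirstU = (\<Union>i<n. FirstSet i)"
definition Gs :: "real set" where "Gs = {t. GC 1 t \<or> GC (-1) t}"

lemma scont: "continuous_on S (\<lambda>v. \<sigma> * p v)" if "S \<subseteq> {a..b}"
  using continuous_on_subset[OF pcont that] by (intro continuous_intros) auto

lemma group_same:
  assumes sg: "\<sigma> = 1 \<or> \<sigma> = -1" and g1: "GC \<sigma> t1" and g2: "GC \<sigma> t2" and lt: "t1 < t2"
  shows "\<exists>u. t1 < u \<and> u < t2 \<and> (u \<in> Zset \<or> u \<in> SepU)"
proof (rule ccontr)
  assume H: "\<not> ?thesis"
  obtain j1 k1 e1 where t1: "t1 \<in> {a<..<b}" "\<sigma> * p t1 > 0" and k1: "k1 < n" "\<sigma> * al k1 < 0" "p t1 = L k1 t1"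
    and e1: "e1 > 0" "\<forall>u. t1 < u \<and> u < t1 + e1 \<longrightarrow> p u = L k1 u"
    using g1 unfolding GC_def by blast
  obtain j2 k2 e2 where t2: "t2 \<in> {a<..<b}" "\<sigma> * p t2 > 0" and j2: "j2 < n" "\<sigma> * al j2 > 0" "p t2 = L j2 t2"
    and e2: "e2 > 0" "\<forall>u. t2 - e2 < u \<and> u < t2 \<longrightarrow> p u = L j2 u"
    using g2 unfolding GC_def by blast
  have t1ab: "t1 \<in> {a..b}" and t2ab: "t2 \<in> {a..b}" using t1 t2 by auto
  have nz: "p u \<noteq> 0" if "t1 < u" "u < t2" for u
  proof
    assume "p u = 0"
    then have "u \<in> Zset" using that t1ab t2ab unfolding Zset_def by auto
    then show False using H that by blast
  qed
  have ns: "\<forall>u\<in>open_segment t1 t2. \<forall>i<n. u \<notin> SepSet i"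
  proof (intro ballI allI impI)
    fix u i assume u: "u \<in> open_segment t1 t2" and i: "i < n"
    have "t1 < u" "u < t2" using u lt by (auto simp: open_segment_eq_real_ivl)
    then have "u \<notin> SepU" using H by blast
    then show "u \<notin> SepSet i" using i unfolding SepU_def by blast
  qed
  have ns': "\<forall>u\<in>open_segment t2 t1. \<forall>i<n. u \<notin> SepSet i" using ns by (simp add: open_segment_commute)
  have pos: "\<forall>u\<in>closed_segment t1 t2. \<sigma> * p u > 0"
  proof
    fix u assume "u \<in> closed_segment t1 t2"
    then have u: "t1 \<le> u" "u \<le> t2" using lt by (auto simp: closed_segment_eq_real_ivl)
    show "\<sigma> * p u > 0"
    proof (rule ccontr)
      assume "\<not> ?thesis"
      then have le: "\<sigma> * p u \<le> 0" by simp
      have "continuous_on {t1..u} (\<lambda>v. \<sigma> * p v)" by (rule scont) (use t1ab t2ab u in auto)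
      then obtain w where w: "t1 \<le> w" "w \<le> u" "\<sigma> * p w = 0"
        using IVT2'[of "\<lambda>v. \<sigma> * p v" u 0 t1] le t1(2) u by auto
      have "w \<noteq> t1" using w(3) t1(2) by auto
      moreover have "w \<noteq> t2" using w(3) t2(2) by auto
      moreover have "p w = 0" using w(3) sg by auto
      ultimately show False using nz[of w] w u by auto
    qed
  qed
  have pos': "\<forall>u\<in>closed_segment t2 t1. \<sigma> * p u > 0" using pos by (simp add: closed_segment_commute)
  define u2 where "u2 = max ((t1 + t2) / 2) (t2 - e2 / 2)"
  have u2: "u2 \<in> open_segment t1 t2" "p u2 = L j2 u2"
  proof -
    have "t1 < u2" "u2 < t2" "t2 - e2 < u2" using lt e2(1) unfolding u2_def by (auto simp: max_def)
    then show "u2 \<in> open_segment t1 t2" "p u2 = L j2 u2" using e2(2) lt by (auto simp: open_segment_eq_real_ivl)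
  qed
  define u1 where "u1 = min ((t1 + t2) / 2) (t1 + e1 / 2)"
  have u1: "u1 \<in> open_segment t2 t1" "p u1 = L k1 u1"
  proof -
    have "t1 < u1" "u1 < t2" "u1 < t1 + e1" using lt e1(1) unfolding u1_def by (auto simp: min_def)
    then show "u1 \<in> open_segment t2 t1" "p u1 = L k1 u1" using e1(2) lt by (auto simp: open_segment_eq_real_ivl)
  qed
  have A1: "\<sigma> * L j2 t1 \<ge> \<sigma> * p t1"
    by (rule avail[OF j2(1) sg t1ab t2ab, of 1]) (use lt j2 pos u2 ns in auto)
  have A2: "\<sigma> * L k1 t2 \<ge> \<sigma> * p t2"
    by (rule avail[OF k1(1) sg t2ab t1ab, of "-1"]) (use lt k1 pos' u1 ns' in auto)
  have d1: "\<sigma> * L j2 t2 - \<sigma> * L j2 t1 = (\<sigma> * al j2) * (t2 - t1)" by (rule sL_diff1)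
  have d2: "\<sigma> * L k1 t2 - \<sigma> * L k1 t1 = (\<sigma> * al k1) * (t2 - t1)" by (rule sL_diff1)
  have m1: "(\<sigma> * al j2) * (t2 - t1) > 0" using j2(2) lt by simp
  have m2: "(\<sigma> * al k1) * (t2 - t1) < 0" using k1(2) lt by (simp add: mult_neg_pos)
  have e3: "\<sigma> * p t1 = \<sigma> * L k1 t1" "\<sigma> * p t2 = \<sigma> * L j2 t2" using k1(3) j2(3) by simp_all
  show False using A1 A2 d1 d2 m1 m2 e3 by linarith
qed

lemma group_mixed:
  assumes g1: "GC \<sigma>1 t1" and g2: "GC \<sigma>2 t2" and s12: "\<sigma>1 = 1 \<and> \<sigma>2 = -1 \<or> \<sigma>1 = -1 \<and> \<sigma>2 = 1"
    and lt: "t1 < t2"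
  shows "\<exists>u. t1 < u \<and> u < t2 \<and> u \<in> Zset"
proof -
  have t1: "t1 \<in> {a<..<b}" "\<sigma>1 * p t1 > 0" using g1 unfolding GC_def by blast+
  have t2: "t2 \<in> {a<..<b}" "\<sigma>2 * p t2 > 0" using g2 unfolding GC_def by blast+
  have c: "continuous_on {t1..t2} p" using continuous_on_subset[OF pcont] t1 t2 by auto
  obtain w where w: "t1 \<le> w" "w \<le> t2" "p w = 0"
  proof (cases "\<sigma>1 = 1")
    case True
    then have "p t1 > 0" "p t2 < 0" using s12 t1 t2 by auto
    then show ?thesis using IVT2'[of p t2 0 t1] c lt that by auto
  next
    case False
    then have "p t1 < 0" "p t2 > 0" using s12 t1 t2 by auto
    then show ?thesis using IVT'[of p t1 0 t2] c lt that by auto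
  qed
  have "w \<noteq> t1" "w \<noteq> t2" using w t1 t2 by auto
  then have wl: "t1 < w" "w < t2" using w by auto
  have "w \<in> Zset" unfolding Zset_def using w t1 t2 by auto
  then show ?thesis using wl by blast
qed

lemma G_sep:
  assumes x: "x \<in> Gs" and y: "y \<in> Gs" and lt: "x < y"
  shows "\<exists>s\<in>Zset \<union> SepU. x < s \<and> s < y"
proof -
  have sg1: "(1::real) = 1 \<or> (1::real) = -1" and sg2: "(-1::real) = 1 \<or> (-1::real) = -1" by auto
  from x y consider "GC 1 x" "GC 1 y" | "GC (-1) x" "GC (-1) y" | "GC 1 x" "GC (-1) y" | "GC (-1) x" "GC 1 y"
    unfolding Gs_def by blast
  then show ?thesis
  proof cases
    case 1 then show ?thesis using group_same[OF sg1 _ _ lt] by blast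
  next
    case 2 then show ?thesis using group_same[OF sg2 _ _ lt] by blast
  next
    case 3 then show ?thesis using group_mixed[of 1 x "-1" y] lt by force
  next
    case 4 then show ?thesis using group_mixed[of "-1" x 1 y] lt by force
  qed
qed

lemma Zset_card: "finite Zset \<and> card Zset \<le> n"
proof -
  have inj: "inj_on T Zset"
  proof (rule inj_onI)
    fix x y assume x: "x \<in> Zset" and y: "y \<in> Zset" and e: "T x = T y"
    have xab: "x \<in> {a..b}" "p x = 0" and yab: "y \<in> {a..b}" "p y = 0" using x y unfolding Zset_def by auto
    have Tx: "T x < n" using Tn xab by auto
    have "L (T x) x = 0" using xab unfolding pth_def by simp
    moreover have "L (T x) y = 0" using yab e unfolding pth_def by simp
    ultimately show "x = y" using L_zero_iff[OF Tx] by simp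
  qed
  have sub: "T ` Zset \<subseteq> {..<n}" using Tn unfolding Zset_def by auto
  have "card Zset \<le> card {..<n}" by (rule card_inj_on_le[OF inj sub]) simp
  moreover have "finite Zset" using finite_imageD[OF finite_subset[OF sub] inj] by simp
  ultimately show ?thesis by simp
qed

lemma SepU_card: "finite SepU \<and> card SepU \<le> n"
  unfolding SepU_def
proof (rule UN_card, intro allI impI subsing ballI)
  fix i x y assume "i < n" "x \<in> SepSet i" "y \<in> SepSet i"
  then show "x = y" by (rule Sep_sub)
qed

lemma LastU_card: "finite LastU \<and> card LastU \<le> n"
  unfolding LastU_def
proof (rule UN_card, intro allI impI subsing ballI)
  fix i x y assume x: "x \<in> LastSet i" and y: "y \<in> LastSet i"
  have X: "x \<in> {a..b}" "p x = L i x" "\<forall>u\<in>{a..b}. x < u \<longrightarrow> p u \<noteq> L i u" using x unfolding LastSet_def by auto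
  have Y: "y \<in> {a..b}" "p y = L i y" "\<forall>u\<in>{a..b}. y < u \<longrightarrow> p u \<noteq> L i u" using y unfolding LastSet_def by auto
  show "x = y"
  proof (rule ccontr)
    assume "x \<noteq> y"
    then consider "x < y" | "y < x" by linarith
    then show False
    proof cases
      case 1 then show ?thesis using X Y by blast
    next
      case 2 then show ?thesis using X Y by blast
    qed
  qed
qed

lemma FirstU_card: "finite FirstU \<and> card FirstU \<le> n"
  unfolding FirstU_def
proof (rule UN_card, intro allI impI subsing ballI)
  fix i x y assume x: "x \<in> FirstSet i" and y: "y \<in> FirstSet i"
  have X: "x \<in> {a..b}" "p x = L i x" "\<forall>u\<in>{a..b}. u < x \<longrightarrow> p u \<noteq> L i u" using x unfolding FirstSet_def by auto
  have Y: "y \<in> {a..b}" "p y = L i y" "\<forall>u\<in>{a..b}. u < y \<longrightarrow> p u \<noteq> L i u" using y unfolding FirstSet_def by auto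
  show "x = y"
  proof (rule ccontr)
    assume "x \<noteq> y"
    then consider "x < y" | "y < x" by linarith
    then show False
    proof cases
      case 1 then show ?thesis using X Y by blast
    next
      case 2 then show ?thesis using X Y by blast
    qed
  qed
qed

lemma Gs_card: "finite Gs \<and> card Gs \<le> 2 * n + 1"
proof -
  have fS: "finite (Zset \<union> SepU)" using Zset_card SepU_card by auto
  have cS: "card (Zset \<union> SepU) \<le> 2 * n"
    using card_Un_le[of Zset SepU] Zset_card SepU_card by linarith
  have "finite Gs \<and> card Gs \<le> card (Zset \<union> SepU) + 1"
  proof (rule count_sep[OF fS], intro ballI impI)
    fix x y assume "x \<in> Gs" "y \<in> Gs" "x < y"
    then show "\<exists>s\<in>Zset \<union> SepU. x < s \<and> s < y" by (rule G_sep)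
  qed
  then show ?thesis using cS by linarith
qed

lemma vcover:
  assumes tv: "t \<in> vertex_times al be a b T"
  shows "t \<in> Zset \<union> SepU \<union> LastU \<union> FirstU \<union> Gs"
proof -
  have tab: "t \<in> {a<..<b}" and vx: "\<forall>\<delta>>0. \<exists>s\<in>{a..b}. \<bar>s - t\<bar> < \<delta> \<and> (al (T s), be (T s)) \<noteq> (al (T t), be (T t))"
    using tv unfolding vertex_times_def by auto
  have tab': "t \<in> {a..b}" using tab by auto
  obtain d0 where d0: "d0 > 0" and dl: "\<forall>s\<in>{a..b}. \<bar>s - t\<bar> < d0 \<longrightarrow> L (T s) t = L (T t) t"
    using traj tab' unfolding is_trajectoid_def by blast
  obtain s0 where s0: "s0 \<in> {a..b}" "\<bar>s0 - t\<bar> < d0" "(al (T s0), be (T s0)) \<noteq> (al (T t), be (T t))"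
    using vx d0 by blast
  define i where "i = T t"
  define j where "j = T s0"
  have i: "i < n" using Tn tab' i_def by auto
  have j: "j < n" using Tn s0 j_def by auto
  have pti: "p t = L i t" unfolding i_def pth_def by simp
  have ptj: "p t = L j t" using dl s0 unfolding j_def i_def pth_def by auto
  have pr: "(al j, be j) \<noteq> (al i, be i)" using s0(3) i_def j_def by simp
  have alne: "al i \<noteq> al j"
  proof
    assume e: "al i = al j"
    have "al i * t + be i = al j * t + be j" using pti ptj unfolding entpos_def by simp
    then have "be i = be j" using e by simp
    then show False using pr e by simp
  qed
  have two: "p s = L i s \<or> p s = L j s" if s: "s \<in> {a..b}" "\<bar>s - t\<bar> < d0" for s
  proof -
    define k where "k = T s"
    have k: "k < n" using Tn s k_def by auto
    have ktt: "L k t = p t" using dl s unfolding k_def i_def pth_def by auto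
    have psk: "p s = L k s" unfolding k_def pth_def by simp
    show ?thesis
    proof (cases "(al k, be k) = (al i, be i)")
      case True then have "L k s = L i s" unfolding entpos_def by simp
      then show ?thesis using psk by simp
    next
      case False
      show ?thesis
      proof (cases "(al k, be k) = (al j, be j)")
        case True then have "L k s = L j s" unfolding entpos_def by simp
        then show ?thesis using psk by simp
      next
        case False2: False
        have "k \<noteq> i" using False by auto
        moreover have "k \<noteq> j" using False2 by auto
        moreover have "i \<noteq> j" using pr by auto
        ultimately have "\<not> (L i t = L j t \<and> L j t = L k t)" using no_three i j k by blast
        then show ?thesis using pti ptj ktt by simp
      qed
    qed
  qed
  show ?thesis
  proof (cases "p t = 0")
    case True then show ?thesis using tab' unfolding Zset_def by auto
  next
    case False
    define \<sigma> where "\<sigma> = (if p t > 0 then 1 else (-1::real))"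
    have sg: "\<sigma> = 1 \<or> \<sigma> = -1" unfolding \<sigma>_def by auto
    have sp: "\<sigma> * p t > 0" using False unfolding \<sigma>_def by auto
    have main: "t \<in> SepU \<union> LastU \<union> FirstU \<union> Gs"
      if X: "X < n" and Y: "Y < n" and pX: "p t = L X t" and pY: "p t = L Y t"
        and gtXY: "\<sigma> * al X > \<sigma> * al Y"
        and tw: "\<forall>s\<in>{a..b}. \<bar>s - t\<bar> < d0 \<longrightarrow> p s = L X s \<or> p s = L Y s" for X Y
    proof -
      have nzX: "\<sigma> * al X \<noteq> 0" using alnz[OF X] sg by auto
      have nzY: "\<sigma> * al Y \<noteq> 0" using alnz[OF Y] sg by auto
      have eXY: "\<sigma> * L X t = \<sigma> * L Y t" using pX pY by simp
      consider "\<sigma> * al Y > 0" | "\<sigma> * al X < 0" | "\<sigma> * al X > 0" "\<sigma> * al Y < 0"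
        using nzX nzY gtXY by linarith
      then show ?thesis
      proof cases
        case 1
        have "t \<in> LastSet X"
          unfolding LastSet_def
        proof (intro CollectI conjI ballI impI)
          show "t \<in> {a..b}" by (rule tab')
          show "p t = L X t" by (rule pX)
          fix u assume u: "u \<in> {a..b}" "t < u"
          show "p u \<noteq> L X u"
            by (rule never_after[OF X Y tab' pX pY sg sp, where dd=1]) (use 1 gtXY u in \<open>auto simp: algebra_simps\<close>)
        qed
        then show ?thesis unfolding LastU_def using X by blast
      next
        case 2
        have "t \<in> FirstSet Y"
          unfolding FirstSet_def
        proof (intro CollectI conjI ballI impI)
          show "t \<in> {a..b}" by (rule tab')
          show "p t = L Y t" by (rule pY)
          fix u assume u: "u \<in> {a..b}" "u < t"
          show "p u \<noteq> L Y u"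
            by (rule never_after[OF Y X tab' pY pX sg sp, where dd="-1"]) (use 2 gtXY u in \<open>auto simp: algebra_simps\<close>)
        qed
        then show ?thesis unfolding FirstU_def using Y by blast
      next
        case 3
        consider (R) "\<forall>\<epsilon>>0. \<exists>u\<in>{a..b}. 0 < u - t \<and> u - t < \<epsilon> \<and> p u = L X u"
          | (Lf) "\<forall>\<epsilon>>0. \<exists>u\<in>{a..b}. 0 < t - u \<and> t - u < \<epsilon> \<and> p u = L Y u"
          | (N) "\<not> (\<forall>\<epsilon>>0. \<exists>u\<in>{a..b}. 0 < u - t \<and> u - t < \<epsilon> \<and> p u = L X u)"
                "\<not> (\<forall>\<epsilon>>0. \<exists>u\<in>{a..b}. 0 < t - u \<and> t - u < \<epsilon> \<and> p u = L Y u)"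
          by blast
        then show ?thesis
        proof cases
          case R
          have "t \<in> SepSet Y"
          proof (rule Sep_side[OF Y tab' pY sg sp, where dd=1])
            show "(1::real) = 1 \<or> (1::real) = -1" by simp
            show "1 * \<sigma> * al Y < 0" using 3 by simp
            show "\<forall>\<epsilon>>0. \<exists>u\<in>{a..b}. 0 < 1 * u - 1 * t \<and> 1 * u - 1 * t < \<epsilon> \<and> \<sigma> * p u > \<sigma> * L Y u"
            proof (intro allI impI)
              fix \<epsilon> :: real assume e: "\<epsilon> > 0"
              obtain u where u: "u \<in> {a..b}" "0 < u - t" "u - t < \<epsilon>" "p u = L X u" using R e by blast
              have d1: "\<sigma> * L X u - \<sigma> * L X t = (\<sigma> * al X) * (u - t)" by (rule sL_diff1)
              have d2: "\<sigma> * L Y u - \<sigma> * L Y t = (\<sigma> * al Y) * (u - t)" by (rule sL_diff1)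
              have m: "(\<sigma> * al Y) * (u - t) < (\<sigma> * al X) * (u - t)"
                using gtXY u(2) by (rule mult_strict_right_mono)
              have "\<sigma> * p u > \<sigma> * L Y u" using d1 d2 m eXY u(4) by simp
              then show "\<exists>u\<in>{a..b}. 0 < 1 * u - 1 * t \<and> 1 * u - 1 * t < \<epsilon> \<and> \<sigma> * p u > \<sigma> * L Y u"
                using u by auto
            qed
          qed
          then show ?thesis unfolding SepU_def using Y by blast
        next
          case Lf
          have "t \<in> SepSet X"
          proof (rule Sep_side[OF X tab' pX sg sp, where dd="-1"])
            show "(-1::real) = 1 \<or> (-1::real) = -1" by simp
            show "-1 * \<sigma> * al X < 0" using 3 by simp
            show "\<forall>\<epsilon>>0. \<exists>u\<in>{a..b}. 0 < -1 * u - -1 * t \<and> -1 * u - -1 * t < \<epsilon> \<and> \<sigma> * p u > \<sigma> * L X u"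
            proof (intro allI impI)
              fix \<epsilon> :: real assume e: "\<epsilon> > 0"
              obtain u where u: "u \<in> {a..b}" "0 < t - u" "t - u < \<epsilon>" "p u = L Y u" using Lf e by blast
              have d1: "\<sigma> * L X u - \<sigma> * L X t = (\<sigma> * al X) * (u - t)" by (rule sL_diff1)
              have d2: "\<sigma> * L Y u - \<sigma> * L Y t = (\<sigma> * al Y) * (u - t)" by (rule sL_diff1)
              have m: "(\<sigma> * al Y) * (t - u) < (\<sigma> * al X) * (t - u)"
                using gtXY u(2) by (rule mult_strict_right_mono)
              have e1: "(\<sigma> * al Y) * (u - t) = - ((\<sigma> * al Y) * (t - u))" by (simp add: algebra_simps)
              have e2: "(\<sigma> * al X) * (u - t) = - ((\<sigma> * al X) * (t - u))" by (simp add: algebra_simps)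
              have e0: "\<sigma> * p u = \<sigma> * L Y u" using u(4) by simp
              have "\<sigma> * p u > \<sigma> * L X u" using d1 d2 m eXY e0 e1 e2 by linarith
              then show "\<exists>u\<in>{a..b}. 0 < -1 * u - -1 * t \<and> -1 * u - -1 * t < \<epsilon> \<and> \<sigma> * p u > \<sigma> * L X u"
                using u by auto
            qed
          qed
          then show ?thesis unfolding SepU_def using X by blast
        next
          case N
          obtain e1 where e1: "e1 > 0" "\<forall>u\<in>{a..b}. 0 < u - t \<longrightarrow> u - t < e1 \<longrightarrow> p u \<noteq> L X u"
            using N(1) by auto
          obtain e2 where e2: "e2 > 0" "\<forall>u\<in>{a..b}. 0 < t - u \<longrightarrow> t - u < e2 \<longrightarrow> p u \<noteq> L Y u"
            using N(2) by auto
          have "GC \<sigma> t"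
            unfolding GC_def
          proof (intro conjI)
            show "t \<in> {a<..<b}" by (rule tab)
            show "\<sigma> * p t > 0" by (rule sp)
            show "\<exists>j<n. \<exists>k<n. \<sigma> * al j > 0 \<and> \<sigma> * al k < 0 \<and> p t = L j t \<and> p t = L k t \<and>
              (\<exists>\<epsilon>>0. \<forall>u. t - \<epsilon> < u \<and> u < t \<longrightarrow> p u = L j u) \<and>
              (\<exists>\<epsilon>>0. \<forall>u. t < u \<and> u < t + \<epsilon> \<longrightarrow> p u = L k u)"
            proof (rule exI[of _ X], rule conjI[OF X], rule exI[of _ Y], rule conjI[OF Y], intro conjI)
              show "\<sigma> * al X > 0" "\<sigma> * al Y < 0" using 3 by auto
              show "p t = L X t" "p t = L Y t" by (rule pX, rule pY)
              show "\<exists>\<epsilon>>0. \<forall>u. t - \<epsilon> < u \<and> u < t \<longrightarrow> p u = L X u"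
              proof (intro exI[of _ "min e2 (min d0 (t - a))"] conjI allI impI)
                show "0 < min e2 (min d0 (t - a))" using e2 d0 tab by auto
                fix u assume u: "t - min e2 (min d0 (t - a)) < u \<and> u < t"
                have uab: "u \<in> {a..b}" using u tab by auto
                have "\<bar>u - t\<bar> < d0" using u by auto
                then have "p u = L X u \<or> p u = L Y u" using tw uab by blast
                moreover have "p u \<noteq> L Y u" using e2(2) uab u by auto
                ultimately show "p u = L X u" by blast
              qed
              show "\<exists>\<epsilon>>0. \<forall>u. t < u \<and> u < t + \<epsilon> \<longrightarrow> p u = L Y u"
              proof (intro exI[of _ "min e1 (min d0 (b - t))"] conjI allI impI)
                show "0 < min e1 (min d0 (b - t))" using e1 d0 tab by auto
                fix u assume u: "t < u \<and> u < t + min e1 (min d0 (b - t))"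
                have uab: "u \<in> {a..b}" using u tab by auto
                have "\<bar>u - t\<bar> < d0" using u by auto
                then have "p u = L X u \<or> p u = L Y u" using tw uab by blast
                moreover have "p u \<noteq> L X u" using e1(2) uab u by auto
                ultimately show "p u = L Y u" by blast
              qed
            qed
          qed
          then have "t \<in> Gs" unfolding Gs_def using sg by auto
          then show ?thesis by blast
        qed
      qed
    qed
    have "\<sigma> * al i \<noteq> \<sigma> * al j" using alne sg by auto
    then consider "\<sigma> * al i > \<sigma> * al j" | "\<sigma> * al j > \<sigma> * al i" by linarith
    then have "t \<in> SepU \<union> LastU \<union> FirstU \<union> Gs"
    proof cases
      case 1
      show ?thesis by (rule main[OF i j pti ptj 1]) (use two in blast)
    next
      case 2
      show ?thesis by (rule main[OF j i ptj pti 2]) (use two in blast)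
    qed
    then show ?thesis by blast
  qed
qed

lemma final: "finite (vertex_times al be a b T) \<and> card (vertex_times al be a b T) \<le> 8 * n"
proof -
  define U where "U = Zset \<union> SepU \<union> LastU \<union> FirstU \<union> Gs"
  have sub: "vertex_times al be a b T \<subseteq> U" using vcover unfolding U_def by blast
  have fZ: "finite Zset" "card Zset \<le> n" using Zset_card by auto
  have fS: "finite SepU" "card SepU \<le> n" using SepU_card by auto
  have fL: "finite LastU" "card LastU \<le> n" using LastU_card by auto
  have fF: "finite FirstU" "card FirstU \<le> n" using FirstU_card by auto
  have fG: "finite Gs" "card Gs \<le> 2 * n + 1" using Gs_card by auto
  have fU: "finite U" unfolding U_def using fZ fS fL fF fG by auto
  have "card U \<le> card (Zset \<union> SepU \<union> LastU \<union> FirstU) + card Gs"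
    unfolding U_def by (rule card_Un_le)
  also have "\<dots> \<le> card (Zset \<union> SepU \<union> LastU) + card FirstU + card Gs"
    using card_Un_le[of "Zset \<union> SepU \<union> LastU" FirstU] by linarith
  also have "\<dots> \<le> card (Zset \<union> SepU) + card LastU + card FirstU + card Gs"
    using card_Un_le[of "Zset \<union> SepU" LastU] by linarith
  also have "\<dots> \<le> card Zset + card SepU + card LastU + card FirstU + card Gs"
    using card_Un_le[of Zset SepU] by linarith
  finally have cU: "card U \<le> 6 * n + 1" using fZ fS fL fF fG by linarith
  have n1: "n \<ge> 1" using Tn[of a] ab by auto
  have "card (vertex_times al be a b T) \<le> card U" by (rule card_mono[OF fU sub])
  then show ?thesis using cU n1 finite_subset[OF sub fU] by linarith
qed

end

theorem mainTheorem16: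
  fixes n :: nat and alpha beta :: "nat \<Rightarrow> real" and a b :: real and T :: "real \<Rightarrow> nat"
  assumes "a < b"
    and nonhoriz: "\<forall>i<n. alpha i \<noteq> 0"
    and no_three: "\<forall>i<n. \<forall>j<n. \<forall>k<n. \<forall>t. i \<noteq> j \<and> j \<noteq> k \<and> i \<noteq> k \<longrightarrow>
               \<not> (entpos alpha beta i t = entpos alpha beta j t \<and>
                  entpos alpha beta j t = entpos alpha beta k t)"
    and traj: "is_trajectoid alpha beta n a b T"
    and minimal: "\<forall>T'. is_trajectoid alpha beta n a b T' \<longrightarrow>
                    Dprime alpha beta a b T \<le> Dprime alpha beta a b T'"
  shows "finite (vertex_times alpha beta a b T) \<and> card (vertex_times alpha beta a b T) \<le> 8 * n"
proof -
  interpret mt n alpha beta a b T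
    by (unfold_locales) (use assms in auto)
  show ?thesis by (rule final)
qed

end
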